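(* Let $n>3$ be an integer. There exist two distinct $n$-multisets $A\neq B$ of complex numbers with $A^{(3)}=B^{(3)}$ if and only if $n\in\{6,27,486\}$. Moreover, each of the multisets $\{0,1^{16},2^{10}\}$, $\{0^5,1^{10},2^{10},3^2\}$, $\{0,1^5,2^{10},3^6,4^5\}$ (of size $27$) and $\{0^{22},1^{176},2^{231},3^{56},4\}$ (of size $486$) is distinct from its mirror and has the same multiset of $3$-sums as its mirror.
   Context: An $n$-multiset is a multiset $A=\{a_1,\dots,a_n\}$ of $n$ numbers, counted with multiplicity; $x^m$ inside a multiset denotes the element $x$ with multiplicity $m$. For $1\le s\le n$, $A^{(s)}$ denotes the multiset of the $\binom{n}{s}$ numbers $a_{i_1}+\dots+a_{i_s}$ over all $1\le i_1<\dots<i_s\le n$. The mirror of an $n$-multiset $A$ with arithmetic mean $a$ is the multiset $\{2a-a_1,\dots,2a-a_n\}$. *)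

theory Defs
  imports Complex_Main "HOL-Library.Multiset"
begin

text \<open>The multiset of s-sums of an n-multiset A: enumerate A as a list xs (any
enumeration; the result does not depend on it) and sum over all index sets
{i_1 < ... < i_s} of size s, counted with multiplicity.\<close>
definition ssums :: "nat \<Rightarrow> complex multiset \<Rightarrow> complex multiset" where
  "ssums s A =
     (let xs = (SOME xs. mset xs = A)
      in image_mset (\<lambda>I. \<Sum>i\<in>I. xs ! i)
           (mset_set {I. I \<subseteq> {..<size A} \<and> card I = s}))"

definition mirror :: "complex multiset \<Rightarrow> complex multiset" where
  "mirror A = (let a = sum_mset A / of_nat (size A) in image_mset (\<lambda>x. 2 * a - x) A)"

end

theory Submission
  imports Defs "HOL-Number_Theory.Number_Theory" "HOL-Computational_Algebra.Polynomial"
begin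


fun sl :: "nat \<Rightarrow> complex list \<Rightarrow> complex multiset" where
  "sl 0 xs = {#0#}"
| "sl (Suc s) [] = {#}"
| "sl (Suc s) (x#xs) = sl (Suc s) xs + image_mset ((+) x) (sl s xs)"

definition ss :: "nat \<Rightarrow> complex list \<Rightarrow> complex multiset" where
  "ss s xs = image_mset (\<lambda>I. \<Sum>i\<in>I. xs ! i) (mset_set {I. I \<subseteq> {..<length xs} \<and> card I = s})"

lemma ss_0: "ss 0 xs = {#0#}"
proof -
  have "{I. I \<subseteq> {..<length xs} \<and> card I = 0} = {{}}"
  proof (rule Set.set_eqI)
    fix I
    show "I \<in> {I. I \<subseteq> {..<length xs} \<and> card I = 0} \<longleftrightarrow> I \<in> {{}}"
      using finite_subset[of I "{..<length xs}"] by auto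
  qed
  thus ?thesis by (simp add: ss_def)
qed

lemma ss_Suc_Nil: "ss (Suc s) [] = {#}"
proof -
  have e: "{I. I = {} \<and> card I = Suc s} = {}" by auto
  show ?thesis unfolding ss_def by (simp add: e)
qed

lemma ss_snoc: "ss (Suc s) (xs @ [x]) = ss (Suc s) xs + image_mset ((+) x) (ss s xs)"
proof -
  let ?n = "length xs"
  define F1 where "F1 = {I. I \<subseteq> {..<?n} \<and> card I = Suc s}"
  define G where "G = {I. I \<subseteq> {..<?n} \<and> card I = s}"
  have fin1: "finite F1" unfolding F1_def by (rule finite_subset[of _ "Pow {..<?n}"]) auto
  have finG: "finite G" unfolding G_def by (rule finite_subset[of _ "Pow {..<?n}"]) auto
  have split: "{I. I \<subseteq> {..<length (xs@[x])} \<and> card I = Suc s} = F1 \<union> insert ?n ` G"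
  proof (rule Set.set_eqI, rule iffI)
    fix I assume "I \<in> {I. I \<subseteq> {..<length (xs@[x])} \<and> card I = Suc s}"
    hence I: "I \<subseteq> {..<Suc ?n}" "card I = Suc s" by auto
    have finI: "finite I" using I(1) finite_subset by blast
    show "I \<in> F1 \<union> insert ?n ` G"
    proof (cases "?n \<in> I")
      case True
      have "I = insert ?n (I - {?n})" using True by auto
      moreover have "I - {?n} \<in> G" using I True finI unfolding G_def by auto
      ultimately show ?thesis by blast
    next
      case False
      hence "I \<subseteq> {..<?n}" using I(1) by (auto simp: less_Suc_eq)
      thus ?thesis using I unfolding F1_def by auto
    qed
  next
    fix I assume "I \<in> F1 \<union> insert ?n ` G"
    thus "I \<in> {I. I \<subseteq> {..<length (xs@[x])} \<and> card I = Suc s}"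
    proof
      assume "I \<in> F1" thus ?thesis unfolding F1_def by auto
    next
      assume "I \<in> insert ?n ` G"
      then obtain J where J: "J \<in> G" "I = insert ?n J" by auto
      have "finite J" "?n \<notin> J" using J unfolding G_def by (auto intro: finite_subset)
      thus ?thesis using J unfolding G_def by auto
    qed
  qed
  have disj: "F1 \<inter> insert ?n ` G = {}" unfolding F1_def by auto
  have inj: "inj_on (insert ?n) G"
  proof (rule inj_onI)
    fix J1 J2 assume "J1 \<in> G" "J2 \<in> G" "insert ?n J1 = insert ?n J2"
    moreover have "?n \<notin> J1" "?n \<notin> J2" using \<open>J1 \<in> G\<close> \<open>J2 \<in> G\<close> unfolding G_def by auto
    ultimately show "J1 = J2" by (metis insert_ident)
  qed
  have finI: "finite (insert ?n ` G)" using finG by simp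
  have "ss (Suc s) (xs @ [x]) =
     image_mset (\<lambda>I. \<Sum>i\<in>I. (xs@[x]) ! i) (mset_set F1) +
     image_mset (\<lambda>I. \<Sum>i\<in>I. (xs@[x]) ! i) (image_mset (insert ?n) (mset_set G))"
    unfolding ss_def split mset_set_Union[OF fin1 finI disj] image_mset_mset_set[OF inj] by simp
  also have "image_mset (\<lambda>I. \<Sum>i\<in>I. (xs@[x]) ! i) (mset_set F1) = ss (Suc s) xs"
    unfolding ss_def F1_def[symmetric]
  proof (rule image_mset_cong)
    fix I assume "I \<in># mset_set F1"
    hence "I \<subseteq> {..<?n}" using fin1 unfolding F1_def by auto
    thus "(\<Sum>i\<in>I. (xs@[x]) ! i) = (\<Sum>i\<in>I. xs ! i)"
      by (intro sum.cong) (auto simp: nth_append)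
  qed
  also have "image_mset (\<lambda>I. \<Sum>i\<in>I. (xs@[x]) ! i) (image_mset (insert ?n) (mset_set G))
      = image_mset ((+) x) (ss s xs)"
    unfolding ss_def G_def[symmetric] multiset.map_comp
  proof (rule image_mset_cong)
    fix J assume "J \<in># mset_set G"
    hence J: "J \<subseteq> {..<?n}" "finite J" using finG unfolding G_def by (auto intro: finite_subset)
    hence nJ: "?n \<notin> J" by auto
    have "(\<Sum>i\<in>insert ?n J. (xs@[x]) ! i) = x + (\<Sum>i\<in>J. (xs@[x]) ! i)"
      using J nJ by simp
    also have "(\<Sum>i\<in>J. (xs@[x]) ! i) = (\<Sum>i\<in>J. xs ! i)"
      using J by (intro sum.cong) (auto simp: nth_append)
    finally show "((\<lambda>I. \<Sum>i\<in>I. (xs@[x]) ! i) \<circ> insert ?n) J = ((+) x \<circ> (\<lambda>I. \<Sum>i\<in>I. xs ! i)) J"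
      by simp
  qed
  finally show ?thesis .
qed

lemma ss_sl: "ss s xs = sl s (rev xs)"
proof (induction xs arbitrary: s rule: rev_induct)
  case Nil thus ?case by (cases s) (simp_all add: ss_0 ss_Suc_Nil)
next
  case (snoc x xs) thus ?case by (cases s) (simp_all add: ss_0 ss_snoc)
qed

lemma sl_remove1:
  "x \<in> set xs \<Longrightarrow> sl (Suc s) xs = sl (Suc s) (remove1 x xs) + image_mset ((+) x) (sl s (remove1 x xs))"
proof (induction xs arbitrary: s)
  case Nil thus ?case by simp
next
  case (Cons y ys)
  show ?case
  proof (cases "y = x")
    case True thus ?thesis by simp
  next
    case False
    hence xin: "x \<in> set ys" using Cons.prems by simp
    let ?r = "remove1 x ys"
    have comm: "image_mset ((+) a) (image_mset ((+) b) M) = image_mset ((+) b) (image_mset ((+) a) M)"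
      for a b :: complex and M by (simp add: multiset.map_comp comp_def add_ac)
    show ?thesis
    proof (cases s)
      case 0
      thus ?thesis using False Cons.IH[OF xin, of 0] by (simp add: add_ac)
    next
      case (Suc s')
      show ?thesis using False Cons.IH[OF xin, of s] Cons.IH[OF xin, of s'] Suc
        by (simp add: add_ac multiset.map_comp comp_def)
    qed
  qed
qed

lemma sl_perm: "mset xs = mset ys \<Longrightarrow> sl s xs = sl s ys"
proof (induction xs arbitrary: ys s)
  case Nil thus ?case by simp
next
  case (Cons x xs)
  have xin: "x \<in> set ys" using Cons.prems by (metis list.set_intros(1) set_mset_mset)
  have m: "mset xs = mset (remove1 x ys)" using Cons.prems by (metis add_mset_remove_trivial mset.simps(2) mset_remove1)
  show ?case
  proof (cases s)
    case 0 thus ?thesis by simp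
  next
    case (Suc s')
    thus ?thesis using sl_remove1[OF xin, of s'] Cons.IH[OF m] by simp
  qed
qed

lemma ssums_sl: "mset xs = A \<Longrightarrow> ssums s A = sl s xs"
proof -
  assume A: "mset xs = A"
  define ys where "ys = (SOME ys. mset ys = A)"
  have ys: "mset ys = A" unfolding ys_def using A by (rule someI)
  have sz: "size A = length ys" using ys by auto
  have "ssums s A = ss s ys" unfolding ssums_def ss_def Let_def ys_def[symmetric] sz ..
  also have "\<dots> = sl s (rev ys)" by (rule ss_sl)
  also have "\<dots> = sl s xs" using A ys by (intro sl_perm) simp
  finally show ?thesis .
qed

lemma ssums_0 [simp]: "ssums 0 A = {#0#}"
proof -
  obtain xs where xs: "mset xs = A" using ex_mset by blast
  show ?thesis using ssums_sl[OF xs] by simp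
qed

lemma ssums_empty [simp]: "ssums (Suc s) {#} = {#}"
  using ssums_sl[of "[]" "{#}"] by simp

lemma ssums_add [simp]:
  "ssums (Suc s) (add_mset x A) = ssums (Suc s) A + image_mset ((+) x) (ssums s A)"
proof -
  obtain xs where xs: "mset xs = A" using ex_mset by blast
  have m: "mset (x#xs) = add_mset x A" using xs by simp
  show ?thesis using ssums_sl[OF m] ssums_sl[OF xs] by simp
qed

lemma ssums_1 [simp]: "ssums (Suc 0) A = A"
  by (induction A) auto


lemma F2: fixes g :: "complex \<Rightarrow> complex"
  shows "2 * (\<Sum>v\<in>#ssums 2 A. g v) = (\<Sum>a\<in>#A. \<Sum>b\<in>#A. g (a+b)) - (\<Sum>a\<in>#A. g (2*a))"
proof (induction A)
  case empty thus ?case by (simp add: numeral_2_eq_2)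
next
  case (add x A)
  have xx: "x + x = 2 * x" by simp
  have "ssums 2 (add_mset x A) = ssums 2 A + image_mset ((+) x) A"
    by (simp add: numeral_2_eq_2)
  hence "2 * (\<Sum>v\<in>#ssums 2 (add_mset x A). g v) = 2 * (\<Sum>v\<in>#ssums 2 A. g v) + 2 * (\<Sum>a\<in>#A. g (x + a))"
    by (simp add: algebra_simps multiset.map_comp comp_def)
  also have "\<dots> = (\<Sum>a\<in>#A. \<Sum>b\<in>#A. g (a+b)) - (\<Sum>a\<in>#A. g (2*a)) + 2 * (\<Sum>a\<in>#A. g (x + a))"
    using add.IH by simp
  finally show ?case by (simp add: sum_mset.distrib add_ac xx algebra_simps)
qed

lemma F3: fixes g :: "complex \<Rightarrow> complex"
  shows "6 * (\<Sum>v\<in>#ssums 3 A. g v) = (\<Sum>a\<in>#A. \<Sum>b\<in>#A. \<Sum>c\<in>#A. g (a+b+c))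
            - 3 * (\<Sum>a\<in>#A. \<Sum>b\<in>#A. g (2*a+b)) + 2 * (\<Sum>a\<in>#A. g (3*a))"
proof (induction A arbitrary: g)
  case empty thus ?case by (simp add: numeral_3_eq_3)
next
  case (add x A)
  have s3: "ssums 3 (add_mset x A) = ssums 3 A + image_mset ((+) x) (ssums 2 A)"
    by (simp add: numeral_3_eq_3 numeral_2_eq_2)
  have f2: "2 * (\<Sum>v\<in>#ssums 2 A. g (x + v)) = (\<Sum>a\<in>#A. \<Sum>b\<in>#A. g (x + (a+b))) - (\<Sum>a\<in>#A. g (x + 2*a))"
    using F2[of "\<lambda>v. g (x + v)" A] by simp
  have "6 * (\<Sum>v\<in>#ssums 3 (add_mset x A). g v) = 6 * (\<Sum>v\<in>#ssums 3 A. g v) + 3 * (2 * (\<Sum>v\<in>#ssums 2 A. g (x + v)))"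
    unfolding s3 by (simp add: algebra_simps multiset.map_comp comp_def)
  also have "\<dots> = (\<Sum>a\<in>#A. \<Sum>b\<in>#A. \<Sum>c\<in>#A. g (a+b+c))
            - 3 * (\<Sum>a\<in>#A. \<Sum>b\<in>#A. g (2*a+b)) + 2 * (\<Sum>a\<in>#A. g (3*a))
            + 3 * ((\<Sum>a\<in>#A. \<Sum>b\<in>#A. g (x + (a+b))) - (\<Sum>a\<in>#A. g (x + 2*a)))"
    using add.IH[of g] f2 by simp
  moreover have "(\<Sum>a\<in>#add_mset x A. \<Sum>b\<in>#add_mset x A. \<Sum>c\<in>#add_mset x A. g (a+b+c))
     = (\<Sum>a\<in>#A. \<Sum>b\<in>#A. \<Sum>c\<in>#A. g (a+b+c)) + 3 * (\<Sum>a\<in>#A. \<Sum>b\<in>#A. g (x + (a+b)))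
       + 3 * (\<Sum>a\<in>#A. g (2*x + a)) + g (3*x)"
    by (simp add: sum_mset.distrib algebra_simps sum_mset_distrib_left[symmetric])
  moreover have "(\<Sum>a\<in>#add_mset x A. \<Sum>b\<in>#add_mset x A. g (2*a+b))
     = (\<Sum>a\<in>#A. \<Sum>b\<in>#A. g (2*a+b)) + (\<Sum>a\<in>#A. g (x + 2*a)) + (\<Sum>b\<in>#A. g (2*x+b)) + g (3*x)"
    by (simp add: sum_mset.distrib algebra_simps sum_mset_distrib_left[symmetric])
  moreover have "(\<Sum>a\<in>#add_mset x A. g (3*a)) = (\<Sum>a\<in>#A. g (3*a)) + g (3*x)"
    by (simp add: algebra_simps)
  ultimately show ?case
    by (simp add: algebra_simps)
qed


definition pw :: "nat \<Rightarrow> complex multiset \<Rightarrow> complex" where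
  "pw k A = (\<Sum>a\<in>#A. a ^ k)"

lemma msum_swap: "(\<Sum>a\<in>#A. \<Sum>i\<in>I. f a i) = (\<Sum>i\<in>I. \<Sum>a\<in>#A. f a i)"
  by (induction A) (simp_all add: sum.distrib)

definition T3 :: "nat \<Rightarrow> (nat \<Rightarrow> complex) \<Rightarrow> complex" where
  "T3 k p = (\<Sum>i\<le>k. \<Sum>j\<le>k-i. of_nat ((k choose i) * ((k-i) choose j)) * p i * p j * p (k-i-j))"

definition T2 :: "nat \<Rightarrow> (nat \<Rightarrow> complex) \<Rightarrow> complex" where
  "T2 k p = (\<Sum>i\<le>k. of_nat (k choose i) * 2^i * p i * p (k-i))"

lemma pow3: "(a+b+c::complex)^k = (\<Sum>i\<le>k. \<Sum>j\<le>k-i. of_nat ((k choose i) * ((k-i) choose j)) * a^i * b^j * c^(k-i-j))"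
proof -
  have "(a+b+c)^k = (a + (b+c))^k" by (simp add: add_ac)
  also have "\<dots> = (\<Sum>i\<le>k. of_nat (k choose i) * a^i * (b+c)^(k-i))" by (rule binomial_ring)
  also have "\<dots> = (\<Sum>i\<le>k. \<Sum>j\<le>k-i. of_nat ((k choose i) * ((k-i) choose j)) * a^i * b^j * c^(k-i-j))"
    by (intro sum.cong refl) (simp add: binomial_ring sum_distrib_left mult_ac diff_diff_add)
  finally show ?thesis .
qed

lemma T3_pw: "(\<Sum>a\<in>#A. \<Sum>b\<in>#A. \<Sum>c\<in>#A. (a+b+c)^k) = T3 k (\<lambda>i. pw i A)"
  unfolding pow3 T3_def
  by (simp add: msum_swap pw_def sum_mset_distrib_left sum_mset_distrib_right mult_ac)

lemma T2_pw: "(\<Sum>a\<in>#A. \<Sum>b\<in>#A. (2*a+b)^k) = T2 k (\<lambda>i. pw i A)"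
  unfolding binomial_ring T2_def
  by (simp add: msum_swap pw_def sum_mset_distrib_left sum_mset_distrib_right mult_ac power_mult_distrib)

lemma T1_pw: "(\<Sum>a\<in>#A. (3*a)^k) = 3^k * pw k A"
  by (simp add: pw_def sum_mset_distrib_left power_mult_distrib)


lemma T3_diff:
  assumes k: "k \<ge> 1" and eq: "\<And>i. i < k \<Longrightarrow> p i = q i"
  shows "T3 k p - T3 k q = 3 * p 0 ^ 2 * (p k - q k)"
proof -
  let ?d = "p k - q k"
  have q0: "q 0 = p 0" using eq k by simp
  have pt: "of_nat ((k choose i) * ((k-i) choose j)) * p i * p j * p (k-i-j)
          - of_nat ((k choose i) * ((k-i) choose j)) * q i * q j * q (k-i-j)
        = (if i = k \<and> j = 0 then p 0 ^ 2 * ?d else 0) + (if i = 0 \<and> j = k then p 0 ^ 2 * ?d else 0)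
          + (if i = 0 \<and> j = 0 then p 0 ^ 2 * ?d else 0)"
    if ij: "i \<le> k" "j \<le> k - i" for i j
  proof -
    consider "i = k" | "i = 0 \<and> j = k" | "i = 0 \<and> j = 0" | "i < k \<and> j < k \<and> k - i - j < k" 
      using ij k by linarith
    thus ?thesis
    proof cases
      case 1 thus ?thesis using ij k q0 by (simp add: power2_eq_square algebra_simps)
    next
      case 2 thus ?thesis using ij k q0 by (simp add: power2_eq_square algebra_simps)
    next
      case 3 thus ?thesis using ij k q0 by (simp add: power2_eq_square algebra_simps)
    next
      case 4 
      hence "i \<noteq> k" "\<not> (i = 0 \<and> j = k)" "\<not> (i = 0 \<and> j = 0)" by auto
      thus ?thesis using 4 eq by auto
    qed
  qed
  have "T3 k p - T3 k q = (\<Sum>i\<le>k. \<Sum>j\<le>k-i.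
        (if i = k \<and> j = 0 then p 0 ^ 2 * ?d else 0) + (if i = 0 \<and> j = k then p 0 ^ 2 * ?d else 0)
          + (if i = 0 \<and> j = 0 then p 0 ^ 2 * ?d else 0))"
    unfolding T3_def sum_subtractf[symmetric]
    by (intro sum.cong refl, rule pt) auto
  also have "\<dots> = 3 * p 0 ^ 2 * ?d"
  proof -
    define X where "X = p 0 ^ 2 * ?d"
    have a: "(\<Sum>j\<le>k-i. if i = k \<and> j = 0 then X else 0) = (if i = k then X else 0)" for i
      by (cases "i = k") simp_all
    have b: "(\<Sum>j\<le>k-i. if i = 0 \<and> j = k then X else 0) = (if i = 0 then X else 0)" for i
      by (cases "i = 0") simp_all
    have c: "(\<Sum>j\<le>k-i. if i = 0 \<and> j = 0 then X else 0) = (if i = 0 then X else 0)" for i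
      by (cases "i = 0") simp_all
    show ?thesis unfolding X_def[symmetric] sum.distrib a b c by (simp add: X_def)
  qed
  finally show ?thesis .
qed



lemma T2_diff:
  assumes k: "k \<ge> 1" and eq: "\<And>i. i < k \<Longrightarrow> p i = q i"
  shows "T2 k p - T2 k q = (2^k + 1) * p 0 * (p k - q k)"
proof -
  let ?d = "p k - q k"
  have q0: "q 0 = p 0" using eq k by simp
  have pt: "of_nat (k choose i) * 2^i * p i * p (k-i) - of_nat (k choose i) * 2^i * q i * q (k-i)
        = (if i = k then 2^k * p 0 * ?d else 0) + (if i = 0 then p 0 * ?d else 0)"
    if ij: "i \<le> k" for i
  proof -
    consider "i = k" | "i = 0" | "0 < i \<and> i < k" using ij k by linarith
    thus ?thesis
    proof cases
      case 1 thus ?thesis using ij k q0 by (simp add: algebra_simps)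
    next
      case 2 thus ?thesis using ij k q0 by (simp add: algebra_simps)
    next
      case 3 thus ?thesis using eq by auto
    qed
  qed
  have "T2 k p - T2 k q = (\<Sum>i\<le>k. (if i = k then 2^k * p 0 * ?d else 0) + (if i = 0 then p 0 * ?d else 0))"
    unfolding T2_def sum_subtractf[symmetric]
    by (intro sum.cong refl, rule pt) auto
  also have "\<dots> = (2^k + 1) * p 0 * ?d"
    by (simp add: sum.distrib algebra_simps)
  finally show ?thesis .
qed

lemma pw0: "pw 0 A = of_nat (size A)"
  by (simp add: pw_def)

lemma key:
  assumes sz: "size A = size B" and S: "ssums 3 A = ssums 3 B" and k: "k \<ge> 1"
    and eq: "\<And>i. i < k \<Longrightarrow> pw i A = pw i B"
  shows "(3 * of_nat (size A) ^ 2 - 3 * (2^k + 1) * of_nat (size A) + 2 * 3^k) * (pw k A - pw k B) = 0"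
proof -
  have F: "6 * (\<Sum>v\<in>#ssums 3 X. v^k) = T3 k (\<lambda>i. pw i X) - 3 * T2 k (\<lambda>i. pw i X) + 2 * (3^k * pw k X)" for X
    using F3[of "\<lambda>v. v^k" X] T3_pw[where A=X and k=k] T2_pw[where A=X and k=k] T1_pw[where A=X and k=k] by simp
  have "0 = (T3 k (\<lambda>i. pw i A) - T3 k (\<lambda>i. pw i B)) - 3 * (T2 k (\<lambda>i. pw i A) - T2 k (\<lambda>i. pw i B))
          + 2 * 3^k * (pw k A - pw k B)"
    using F[of A] F[of B] S by (simp add: algebra_simps)
  also have "\<dots> = 3 * pw 0 A ^ 2 * (pw k A - pw k B) - 3 * ((2^k + 1) * pw 0 A * (pw k A - pw k B))
          + 2 * 3^k * (pw k A - pw k B)"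
    using T3_diff[of k "\<lambda>i. pw i A" "\<lambda>i. pw i B"] T2_diff[of k "\<lambda>i. pw i A" "\<lambda>i. pw i B"] k eq by simp
  finally show ?thesis by (simp add: pw0 algebra_simps)
qed


lemma msum_single:
  assumes "\<And>a. a \<in># A \<Longrightarrow> a \<noteq> v \<Longrightarrow> f a = 0"
  shows "(\<Sum>a\<in>#A. f a) = of_nat (count A v) * (f v :: complex)"
proof -
  have "(\<Sum>a\<in>#A. f a) = (\<Sum>a\<in>#A. if a = v then f v else 0)"
    using assms by (intro arg_cong[where f=sum_mset] image_mset_cong) auto
  thus ?thesis by (simp add: sum_mset_delta)
qed

lemma pw_determines:
  assumes "\<And>k. pw k A = pw k B"
  shows "A = B"
proof (rule multiset_eqI)
  fix v
  have P: "(\<Sum>a\<in>#A. poly p a) = (\<Sum>b\<in>#B. poly p b)" for p :: "complex poly"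
  proof -
    have "(\<Sum>a\<in>#X. poly p a) = (\<Sum>i\<le>degree p. coeff p i * pw i X)" for X
      by (simp add: poly_altdef msum_swap pw_def sum_mset_distrib_left)
    thus ?thesis using assms by simp
  qed
  define W where "W = (set_mset A \<union> set_mset B) - {v}"
  define p where "p = (\<Prod>w\<in>W. [:-w, 1:])"
  have pp: "poly p x = (\<Prod>w\<in>W. x - w)" for x
    unfolding p_def by (simp add: poly_prod)
  have finW: "finite W" unfolding W_def by simp
  have nz: "poly p v \<noteq> 0" unfolding pp using finW by (simp add: W_def)
  have zA: "poly p a = 0" if "a \<in># A" "a \<noteq> v" for a
    unfolding pp using finW that by (intro prod_zero) (auto simp: W_def)
  have zB: "poly p a = 0" if "a \<in># B" "a \<noteq> v" for a
    unfolding pp using finW that by (intro prod_zero) (auto simp: W_def)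
  have "of_nat (count A v) * poly p v = of_nat (count B v) * poly p v"
    using P[of p] msum_single[of A v "poly p", OF zA] msum_single[of B v "poly p", OF zB] by simp
  thus "count A v = count B v" using nz by simp
qed


definition psum :: "complex multiset \<Rightarrow> complex multiset \<Rightarrow> complex multiset" where
  "psum X Y = sum_mset (image_mset (\<lambda>x. image_mset ((+) x) Y) X)"

lemma rep_plus: "replicate_mset (m + n) x = replicate_mset m x + replicate_mset n x"
  by (induction m) simp_all

lemma ssums_empty23 [simp]: "ssums 2 {#} = {#}" "ssums 3 {#} = {#}"
  by (simp_all add: numeral_2_eq_2 numeral_3_eq_3)

lemma psum_empty_left [simp]: "psum {#} Y = {#}" by (simp add: psum_def)
lemma psum_empty_right [simp]: "psum X {#} = {#}" by (induction X) (simp_all add: psum_def)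
lemma psum_plus_left [simp]: "psum (X1 + X2) Y = psum X1 Y + psum X2 Y" by (simp add: psum_def)
lemma psum_plus_right [simp]: "psum X (Y1 + Y2) = psum X Y1 + psum X Y2"
  by (induction X) (simp_all add: psum_def add_ac)
lemma psum_add_right: "psum X (add_mset y Y) = psum X Y + image_mset ((+) y) X"
  by (induction X) (simp_all add: psum_def add_ac)
lemma psum_add_left: "psum (add_mset x X) Y = image_mset ((+) x) Y + psum X Y"
  by (simp add: psum_def)
lemma psum_rep [simp]: "psum (replicate_mset m u) (replicate_mset n v) = replicate_mset (m*n) (u+v)"
  by (induction m) (simp_all add: psum_def rep_plus add_ac)

lemma ssums2_plus: "ssums 2 (A + B) = ssums 2 A + psum A B + ssums 2 B"
proof (induction B)
  case empty thus ?case by (simp add: numeral_2_eq_2)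
next
  case (add x B)
  have "ssums 2 (A + add_mset x B) = ssums 2 (add_mset x (A + B))" by simp
  also have "\<dots> = ssums 2 (A + B) + image_mset ((+) x) (A + B)" by (simp add: numeral_2_eq_2)
  also have "\<dots> = ssums 2 A + psum A (add_mset x B) + ssums 2 (add_mset x B)"
    using add.IH by (simp add: numeral_2_eq_2 psum_add_right add_ac)
  finally show ?case .
qed

lemma img_psum: "image_mset ((+) x) (psum X Y) = psum X (image_mset ((+) x) Y)"
  by (induction X) (simp_all add: psum_def multiset.map_comp comp_def add_ac)

lemma ssums3_plus: "ssums 3 (A + B) = ssums 3 A + psum (ssums 2 A) B + psum A (ssums 2 B) + ssums 3 B"
proof (induction B)
  case empty thus ?case by (simp add: numeral_3_eq_3)
next
  case (add x B)
  have s3: "ssums 3 (add_mset y C) = ssums 3 C + image_mset ((+) y) (ssums 2 C)" for y C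
    by (simp add: numeral_3_eq_3 numeral_2_eq_2)
  have s2: "ssums 2 (add_mset y C) = ssums 2 C + image_mset ((+) y) C" for y C
    by (simp add: numeral_2_eq_2)
  have "ssums 3 (A + add_mset x B) = ssums 3 (add_mset x (A + B))" by simp
  also have "\<dots> = ssums 3 (A + B) + image_mset ((+) x) (ssums 2 (A + B))" by (rule s3)
  also have "\<dots> = ssums 3 A + psum (ssums 2 A) (add_mset x B) + psum A (ssums 2 (add_mset x B)) + ssums 3 (add_mset x B)"
    using add.IH unfolding s3 s2 ssums2_plus
    by (simp add: psum_add_right img_psum add_ac)
  finally show ?case .
qed

lemma choose3: "6 * (m choose 3) = m * (m - 1) * (m - 2)"
proof (cases m)
  case 0 thus ?thesis by simp
next
  case (Suc n)
  have a: "3 * (Suc n choose 3) = Suc n * (n choose 2)"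
    using Suc_times_binomial[of 2 n] by (simp add: numeral_3_eq_3 numeral_2_eq_2)
  have b: "2 * (n choose 2) = n * (n - 1)"
  proof (cases n)
    case 0 thus ?thesis by simp
  next
    case (Suc n') thus ?thesis using Suc_times_binomial[of 1 n'] by (simp add: numeral_2_eq_2)
  qed
  have "6 * (Suc n choose 3) = 2 * (3 * (Suc n choose 3))" by simp
  also have "\<dots> = Suc n * (2 * (n choose 2))" unfolding a by simp
  also have "\<dots> = Suc n * (n * (n - 1))" unfolding b ..
  finally show ?thesis using Suc by (simp add: algebra_simps)
qed

lemma ssums_rep: "ssums j (replicate_mset m x) = replicate_mset (m choose j) (of_nat j * x)"
proof (induction m arbitrary: j)
  case 0 thus ?case by (cases j) simp_all
next
  case (Suc m) thus ?case
    by (cases j) (simp_all add: algebra_simps rep_plus)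
qed

lemma ssums2_rep [simp]: "ssums 2 (replicate_mset m x) = replicate_mset (m * (m - 1) div 2) (2 * x)"
  using ssums_rep[of 2 m x] by (simp add: choose_two)

lemma ssums3_rep [simp]: "ssums 3 (replicate_mset m x) = replicate_mset (m * (m - 1) * (m - 2) div 6) (3 * x)"
proof -
  have "m*(m-1)*(m-2) div 6 = m choose 3" using choose3[of m]
    by (metis nonzero_mult_div_cancel_left zero_neq_numeral)
  thus ?thesis using ssums_rep[of 3 m x] by simp
qed

lemma ssums_mirror:
  "ssums s (image_mset (\<lambda>x. c - x) A) = image_mset (\<lambda>v. of_nat s * c - v) (ssums s A)"
proof (induction A arbitrary: s)
  case empty thus ?case by (cases s) simp_all
next
  case (add x A) thus ?case
    by (cases s) (simp_all add: multiset.map_comp comp_def algebra_simps)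
qed

lemma ssums_sing [simp]: "ssums 2 {#x#} = {#}" "ssums 3 {#x#} = {#}"
  by (simp_all add: numeral_2_eq_2 numeral_3_eq_3)


lemma psum_single [simp]:
  "psum {#u#} (replicate_mset n v) = replicate_mset n (u+v)"
  "psum (replicate_mset n v) {#u#} = replicate_mset n (v+u)"
  "psum {#u#} {#v#} = {#u+v#}"
  by (simp_all add: psum_def) (induction n; simp add: psum_def)

lemma psum_single_add [simp]:
  "psum {#u#} (add_mset v V) = add_mset (u+v) (psum {#u#} V)"
  "psum (add_mset v V) {#u#} = add_mset (v+u) (psum V {#u#})"
  by (simp_all add: psum_def add_ac)

lemma mirror_eq: "mirror A = image_mset (\<lambda>x. 2 * (sum_mset A / of_nat (size A)) - x) A"
  by (simp add: mirror_def Let_def)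

lemma ex6:
  defines "A \<equiv> replicate_mset 2 0 + replicate_mset 3 2 + {#3::complex#}"
  shows "mirror A \<noteq> A \<and> ssums 3 (mirror A) = ssums 3 A"
proof -
  have m: "mirror A = image_mset (\<lambda>x. 3 - x) A"
    unfolding mirror_eq A_def by simp
  have S: "ssums 3 (mirror A) = image_mset (\<lambda>v. 9 - v) (ssums 3 A)"
    unfolding m ssums_mirror by simp
  have E: "ssums 3 A = image_mset (\<lambda>v. 9 - v) (ssums 3 A)"
    unfolding A_def ssums3_plus ssums2_plus
    by (simp add: ssums3_plus ssums2_plus)
  have "count (mirror A) 1 \<noteq> count A 1" unfolding m unfolding A_def by simp
  hence "mirror A \<noteq> A" by metis
  thus ?thesis using S E by simp
qed

lemma ex486:
  defines "A \<equiv> replicate_mset 22 0 + replicate_mset 176 1 + replicate_mset 231 2 + replicate_mset 56 3 + {#4::complex#}"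
  shows "mirror A \<noteq> A \<and> ssums 3 (mirror A) = ssums 3 A"
proof -
  have m: "mirror A = image_mset (\<lambda>x. 10/3 - x) A"
    unfolding mirror_eq A_def by simp
  have S: "ssums 3 (mirror A) = image_mset (\<lambda>v. 10 - v) (ssums 3 A)"
    unfolding m ssums_mirror by simp
  have E: "ssums 3 A = image_mset (\<lambda>v. 10 - v) (ssums 3 A)"
    unfolding A_def ssums3_plus ssums2_plus
    apply simp
    apply (rule multiset_eqI)
    subgoal for x
      by (cases "x \<in> {0,1,2,3,4,5,6,7,8,9,10,11,12}") auto
    done
  have "count (mirror A) (10/3) \<noteq> count A (10/3)" unfolding m unfolding A_def by simp
  hence "mirror A \<noteq> A" by metis
  thus ?thesis using S E by simp
qed


lemma fin_check:
  fixes K a r :: nat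
  assumes "K < 11" "a < 11" "r = 1 \<or> r = 2"
    "(3^a*r)^2 + 2*3^K = (2^(Suc K)+1)*(3^a*r)" "3^a*r > 3"
  shows "3^a*r \<in> {6,27,486::nat}"
proof -
  have K: "K \<in> {0,1,2,3,4,5,6,7,8,9,10}" using assms(1) by (simp; presburger)
  have a: "a \<in> {0,1,2,3,4,5,6,7,8,9,10}" using assms(2) by (simp; presburger)
  show ?thesis using K a assms(3-5) by auto
qed

lemma lte3:
  fixes k m :: nat
  assumes "(3::nat)^m dvd 2^k + 1" "k \<ge> 1"
  shows "3^m \<le> 3*k"
proof (cases m)
  case 0 thus ?thesis using assms by simp
next
  case (Suc m')
  have ord32: "ord 3 (2::nat) = 2"
  proof -
    have d: "ord 3 (2::nat) dvd 2" by (subst ord_divides'[symmetric]) (simp add: cong_def)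
    have nd: "\<not> ord 3 (2::nat) dvd 1" by (subst ord_divides'[symmetric]) (simp add: cong_def)
    from d have "ord 3 (2::nat) \<in> {1,2}" using dvd_imp_le[OF d] by (cases "ord 3 (2::nat)") auto
    with nd show ?thesis by auto
  qed
  have pr: "residue_primroot 3 (2::nat)"
    unfolding residue_primroot_def using ord32 by (simp add: totient_prime)
  have lift: "\<forall>k>0. residue_primroot (3 ^ k) (2::nat)"
    using residue_primroot_prime_lift_iff[of 3 2] pr by (simp add: cong_def)
  moreover have "m > 0" using Suc by simp
  ultimately have "residue_primroot (3 ^ m) (2::nat)" by blast
  hence "ord (3^m) (2::nat) = totient (3^Suc m')"
    using Suc by (simp only: residue_primroot_def)
  also have "totient (3^Suc m') = 3^m' * (3 - 1)" by (rule totient_prime_power_Suc) simp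
  finally have ordm: "ord (3^m) (2::nat) = 2 * 3^m'" by simp
  have sq: "x*x - 1 = (x+1)*(x-1)" if "x \<ge> 1" for x :: nat
    using that by (cases x) (simp_all add: algebra_simps)
  have e: "(2::nat)^(2*k) - 1 = (2^k + 1) * (2^k - 1)"
    using sq[of "2^k"] by (simp add: power_mult power2_eq_square mult.commute[of 2 k])
  have "3^m dvd (2::nat)^(2*k) - 1" by (subst e) (rule dvd_mult2[OF assms(1)])
  hence "[(2::nat)^(2*k) = 1] (mod 3^m)"
    by (subst cong_altdef_nat) simp_all
  hence "2 * 3^m' dvd 2 * k" using ordm by (simp add: ord_divides' )
  hence "3^m' dvd k" by simp
  hence "3^m' \<le> k" using assms(2) by (simp add: dvd_imp_le)
  thus ?thesis using Suc by simp
qed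

lemma growth: "k \<ge> 12 \<Longrightarrow> 3*k*(2^k+1) < (3::nat)^(k-1)"
proof (induction k rule: dec_induct)
  case base thus ?case by simp
next
  case (step k)
  have "2*2^k \<le> k*2^k" using step(1) by (intro mult_right_mono) auto
  hence h: "2*2^k + 1 \<le> k*2^k + 2*k" using step(1) by linarith
  have "3*(Suc k)*(2^(Suc k)+1) \<le> 3 * (3*k*(2^k+1))"
    using h by (simp add: algebra_simps; linarith)
  also have "\<dots> < 3 * 3^(k-1)" using step by simp
  also have "\<dots> = 3^(Suc k - 1)" using step(1) by (cases k) auto
  finally show ?case .
qed

lemma decomp3:
  fixes x K :: nat
  assumes "x dvd 2 * 3^K"
  obtains a r where "x = 3^a * r" "r = 1 \<or> r = 2"
proof -
  have x0: "x \<noteq> 0" using assms by (cases "x = 0") auto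
  obtain r where r: "x = 3 ^ multiplicity 3 x * r" "\<not> 3 dvd r"
    using multiplicity_decompose'[of x 3] x0 by auto
  have "r dvd 2 * 3^K" using assms r(1) by (metis dvd_mult_right)
  moreover have "coprime r (3^K)"
  proof -
    have p3: "prime (3::nat)" by simp
    have "coprime 3 r" using prime_imp_coprime[OF p3 r(2)] .
    thus ?thesis by (simp add: coprime_commute)
  qed
  ultimately have "r dvd 2" by (metis coprime_dvd_mult_left_iff)
  hence "r = 1 \<or> r = 2" using dvd_imp_le[of r 2] by (cases r) (auto simp: le_Suc_eq)
  thus ?thesis using r that by blast
qed

lemma nt:
  fixes n k :: nat
  assumes k: "k \<ge> 1" and n: "n > 3" and eq: "3*n^2 + 2*3^k = 3*(2^k+1)*n"
  shows "n \<in> {6,27,486}"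
proof -
  define K where "K = k - 1"
  have kK: "k = Suc K" using k K_def by simp
  have "3*(n^2 + 2*3^K) = 3*((2^k+1)*n)" using eq unfolding kK by (simp add: algebra_simps)
  hence eq2: "n^2 + 2*3^K = (2^k+1)*n" by simp
  have le: "n \<le> 2^k+1"
  proof (rule ccontr)
    assume "\<not> ?thesis"
    hence "(2^k+1)*n < n*n" using n by (intro mult_strict_right_mono) auto
    thus False using eq2 by (simp add: power2_eq_square)
  qed
  define n' where "n' = 2^k + 1 - n"
  have sum: "n + n' = 2^k+1" using le n'_def by simp
  have prod: "n * n' = 2*3^K"
  proof -
    have "n * n' + n^2 = n * (n + n')" by (simp add: power2_eq_square algebra_simps)
    also have "\<dots> = (2^k+1)*n" using sum by simp
    finally have "n * n' + n^2 = (2^k+1)*n" .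
    thus ?thesis using eq2 by simp
  qed
  obtain a r where ar: "n = 3^a * r" "r = 1 \<or> r = 2"
  proof -
    have "n dvd 2*3^K" using prod by (metis dvd_triv_left)
    thus ?thesis using decomp3 that by blast
  qed
  obtain b r' where br: "n' = 3^b * r'" "r' = 1 \<or> r' = 2"
  proof -
    have "n' dvd 2*3^K" using prod by (metis dvd_triv_right)
    thus ?thesis using decomp3 that by blast
  qed
  define m where "m = min a b"
  have "(3::nat)^m dvd n" "(3::nat)^m dvd n'" using ar br by (auto simp: m_def le_imp_power_dvd intro: dvd_mult2)
  hence "3^m dvd n + n'" by (rule dvd_add)
  hence "(3::nat)^m dvd 2^k+1" using sum by simp
  hence m3: "3^m \<le> 3*k" using lte3 k by blast
  have M: "(3::nat)^(max a b) \<le> 2^k+1"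
  proof -
    have "3^a \<le> n" "3^b \<le> n'" using ar br by auto
    thus ?thesis using sum by (simp add: max_def)
  qed
  have "(3::nat)^(a+b) = 3^m * 3^(max a b)" by (simp add: m_def power_add[symmetric] min_def max_def)
  also have "\<dots> \<le> 3*k*(2^k+1)" using m3 M by (intro mult_mono) auto
  finally have ab2: "3^(a+b) \<le> 3*k*(2^k+1)" .
  have "a + b = K"
  proof -
    have E: "3^(a+b) * (r*r') = 2*(3::nat)^K" using prod ar br by (simp add: power_add algebra_simps)
    have o1: "odd ((3::nat)^(a+b))" and o2: "odd ((3::nat)^K)" by simp_all
    have "even (3^(a+b) * (r*r'))" unfolding E by simp
    hence ev: "even (r*r')" using o1 by simp
    have "r*r' = 2"
    proof (rule ccontr)
      assume "r*r' \<noteq> 2"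
      hence "r*r' = 4" using ar(2) br(2) ev by auto
      hence "2*(3^(a+b)*2) = 2*(3::nat)^K" using E by simp
      hence "3^(a+b)*2 = (3::nat)^K" by (rule mult_left_cancel[THEN iffD1, rotated]) simp
      hence "even ((3::nat)^K)" by (metis dvd_triv_right)
      thus False using o2 by simp
    qed
    hence "3^(a+b) = (3::nat)^K" using E by simp
    thus ?thesis by (simp add: power_inject_exp)
  qed
  hence "3^(k-1) \<le> 3*k*(2^k+1)" using ab2 K_def by simp
  hence k11: "k < 12" using growth[of k] by (cases "k \<ge> 12") auto
  have K11: "K < 11" using k11 kK by simp
  have a11: "a < 11" using \<open>a + b = K\<close> K11 by simp
  have e: "(3^a*r)^2 + 2*3^K = (2^(Suc K)+1)*(3^a*r)" using eq2 unfolding ar(1) kK .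
  have g3: "3^a*r > 3" using n unfolding ar(1) .
  have "3^a*r \<in> {6,27,486::nat}" by (rule fin_check[OF K11 a11 ar(2) e g3])
  thus ?thesis unfolding ar(1) .
qed


lemma ex27a:
  defines "A \<equiv> {#0#} + replicate_mset 16 1 + replicate_mset 10 (2::complex)"
  shows "mirror A \<noteq> A \<and> ssums 3 (mirror A) = ssums 3 A"
proof -
  have m: "mirror A = image_mset (\<lambda>x. 8/3 - x) A"
    unfolding mirror_eq A_def by simp
  have S: "ssums 3 (mirror A) = image_mset (\<lambda>v. 8 - v) (ssums 3 A)"
    unfolding m ssums_mirror by simp
  have E: "ssums 3 A = image_mset (\<lambda>v. 8 - v) (ssums 3 A)"
    unfolding A_def ssums3_plus ssums2_plus
    apply (simp add: psum_add_left)
    apply (rule multiset_eqI)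
    subgoal for x
      by (cases "x \<in> {0,1,2,3,4,5,6,7,8,9,10,11,12}") auto
    done
  have "count (mirror A) (8/3) \<noteq> count A (8/3)" unfolding m unfolding A_def by simp
  hence "mirror A \<noteq> A" by metis
  thus ?thesis using S E by simp
qed

lemma ex27b:
  defines "A \<equiv> replicate_mset 5 0 + replicate_mset 10 1 + replicate_mset 10 2 + replicate_mset 2 (3::complex)"
  shows "mirror A \<noteq> A \<and> ssums 3 (mirror A) = ssums 3 A"
proof -
  have m: "mirror A = image_mset (\<lambda>x. 8/3 - x) A"
    unfolding mirror_eq A_def by simp
  have S: "ssums 3 (mirror A) = image_mset (\<lambda>v. 8 - v) (ssums 3 A)"
    unfolding m ssums_mirror by simp
  have E: "ssums 3 A = image_mset (\<lambda>v. 8 - v) (ssums 3 A)"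
    unfolding A_def ssums3_plus ssums2_plus
    apply (simp add: psum_add_left)
    apply (rule multiset_eqI)
    subgoal for x
      by (cases "x \<in> {0,1,2,3,4,5,6,7,8,9,10,11,12}") auto
    done
  have "count (mirror A) (8/3) \<noteq> count A (8/3)" unfolding m unfolding A_def by simp
  hence "mirror A \<noteq> A" by metis
  thus ?thesis using S E by simp
qed

lemma ex27c:
  defines "A \<equiv> {#0#} + replicate_mset 5 1 + replicate_mset 10 2 + replicate_mset 6 3 + replicate_mset 5 (4::complex)"
  shows "mirror A \<noteq> A \<and> ssums 3 (mirror A) = ssums 3 A"
proof -
  have m: "mirror A = image_mset (\<lambda>x. 14/3 - x) A"
    unfolding mirror_eq A_def by simp
  have S: "ssums 3 (mirror A) = image_mset (\<lambda>v. 14 - v) (ssums 3 A)"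
    unfolding m ssums_mirror by simp
  have E: "ssums 3 A = image_mset (\<lambda>v. 14 - v) (ssums 3 A)"
    unfolding A_def ssums3_plus ssums2_plus
    apply (simp add: psum_add_left)
    apply (rule multiset_eqI)
    subgoal for x
      by (cases "x \<in> {0,1,2,3,4,5,6,7,8,9,10,11,12,13,14}") auto
    done
  have "count (mirror A) (14/3) \<noteq> count A (14/3)" unfolding m unfolding A_def by simp
  hence "mirror A \<noteq> A" by metis
  thus ?thesis using S E by simp
qed

lemma size_mirror [simp]: "size (mirror A) = size A"
  by (simp add: mirror_def Let_def)

lemma only_if:
  assumes n: "n > 3" and sA: "size A = n" and sB: "size B = n" and ne: "A \<noteq> B"
    and S: "ssums 3 A = ssums 3 B"
  shows "n \<in> {6, 27, 486}"
proof -
  have ex: "\<exists>k. pw k A \<noteq> pw k B" using pw_determines ne by blast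
  define k where "k = (LEAST k. pw k A \<noteq> pw k B)"
  have dk: "pw k A \<noteq> pw k B" unfolding k_def using ex by (rule LeastI_ex)
  have lt: "\<And>i. i < k \<Longrightarrow> pw i A = pw i B" unfolding k_def using not_less_Least by blast
  have k1: "k \<ge> 1"
  proof (rule ccontr)
    assume "\<not> k \<ge> 1"
    hence "k = 0" by simp
    thus False using dk sA sB by (simp add: pw0)
  qed
  have "(3 * of_nat (size A) ^ 2 - 3 * (2^k + 1) * of_nat (size A) + 2 * 3^k) * (pw k A - pw k B) = 0"
    using key[OF _ S k1 lt] sA sB by simp
  hence "3 * of_nat n ^ 2 - 3 * (2^k + 1) * of_nat n + 2 * 3^k = (0::complex)" using dk sA by simp
  hence "of_nat (3*n^2 + 2*3^k) = (of_nat (3*(2^k+1)*n) :: complex)" by (simp add: algebra_simps)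
  hence "3*n^2 + 2*3^k = 3*(2^k+1)*n" by (simp only: of_nat_eq_iff)
  thus ?thesis using nt[OF k1 n] by simp
qed

theorem mainTheorem13:
  shows "(\<forall>n::nat. n > 3 \<longrightarrow>
           ((\<exists>A B :: complex multiset. size A = n \<and> size B = n \<and> A \<noteq> B \<and>
               ssums 3 A = ssums 3 B) \<longleftrightarrow> n \<in> {6, 27, 486}))
   \<and> (\<forall>A \<in> {
        {#0#} + replicate_mset 16 1 + replicate_mset 10 2,
        replicate_mset 5 0 + replicate_mset 10 1 + replicate_mset 10 2 + replicate_mset 2 3,
        {#0#} + replicate_mset 5 1 + replicate_mset 10 2 + replicate_mset 6 3 + replicate_mset 5 4,
        replicate_mset 22 0 + replicate_mset 176 1 + replicate_mset 231 2 + replicate_mset 56 3 + {#4#}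
       } :: complex multiset set.
        mirror A \<noteq> A \<and> ssums 3 (mirror A) = ssums 3 A)"
proof (intro conjI allI impI)
  show "\<forall>A \<in> {
        {#0#} + replicate_mset 16 1 + replicate_mset 10 2,
        replicate_mset 5 0 + replicate_mset 10 1 + replicate_mset 10 2 + replicate_mset 2 3,
        {#0#} + replicate_mset 5 1 + replicate_mset 10 2 + replicate_mset 6 3 + replicate_mset 5 4,
        replicate_mset 22 0 + replicate_mset 176 1 + replicate_mset 231 2 + replicate_mset 56 3 + {#4#}
       } :: complex multiset set.
        mirror A \<noteq> A \<and> ssums 3 (mirror A) = ssums 3 A"
    using ex27a ex27b ex27c ex486 by blast
next
  fix n :: nat assume n: "n > 3"
  show "(\<exists>A B :: complex multiset. size A = n \<and> size B = n \<and> A \<noteq> B \<and>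
               ssums 3 A = ssums 3 B) \<longleftrightarrow> n \<in> {6, 27, 486}"
  proof
    assume "\<exists>A B :: complex multiset. size A = n \<and> size B = n \<and> A \<noteq> B \<and> ssums 3 A = ssums 3 B"
    then obtain A B :: "complex multiset" where "size A = n" "size B = n" "A \<noteq> B" "ssums 3 A = ssums 3 B"
      by blast
    thus "n \<in> {6, 27, 486}" using only_if[OF n] by blast
  next
    have W: "\<exists>A B :: complex multiset. size A = size X \<and> size B = size X \<and> A \<noteq> B \<and> ssums 3 A = ssums 3 B"
      if "mirror X \<noteq> X \<and> ssums 3 (mirror X) = ssums 3 X" for X
      using that by (intro exI[of _ X] exI[of _ "mirror X"]) auto
    assume "n \<in> {6, 27, 486}"
    moreover have "size (replicate_mset 2 0 + replicate_mset 3 2 + {#3::complex#}) = 6" by simp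
    moreover have "size ({#0#} + replicate_mset 16 1 + replicate_mset 10 (2::complex)) = 27" by simp
    moreover have "size (replicate_mset 22 0 + replicate_mset 176 1 + replicate_mset 231 2 + replicate_mset 56 3 + {#4::complex#}) = 486" by simp
    ultimately show "\<exists>A B :: complex multiset. size A = n \<and> size B = n \<and> A \<noteq> B \<and> ssums 3 A = ssums 3 B"
      using W[OF ex6] W[OF ex27a] W[OF ex486] by auto
  qed
qed


end
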